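(* Let $\mathcal{A}=(Q,A,\delta,q_0,F)$ be a semi-flower automaton. Then for every letter $b\in A$, $\mathcal{A}$ is a one-cluster automaton with respect to $b$; that is, the sub-digraph of the state digraph of $\mathcal{A}$ consisting of all states and all $b$-edges has exactly one $b$-cluster.
   Context: An automaton over a finite alphabet $A$ is a quintuple $\mathcal{A}=(Q,A,\delta,q_0,F)$ with $Q$ a non-empty finite set of states, initial state $q_0\in Q$, set of final states $F\subseteq Q$, and total transition function $\delta:Q\times A\to Q$. Its digraph $D(\mathcal{A})$ has vertex set $Q$ and, for each $p\in Q$, $a\in A$, an edge labeled $a$ (an $a$-edge) from $p$ to $\delta(p,a)$. A path is an alternating sequence $v_0,e_1,v_1,\dots,e_k,v_k$ of distinct vertices and edges with $e_i$ going from $v_{i-1}$ to $v_i$; a cycle is a path with at least one edge whose initial and terminal vertices coincide. A state $q$ is accessible if there is a path from $q_0$ to $q$, and co-accessible if there is a path from $q$ to a final state. $\mathcal{A}$ is a semi-flower automaton (SFA) if $F=\{q_0\}$, every state is accessible and co-accessible, and every cycle in $D(\mathcal{A})$ passes through $q_0$. For $b\in A$, let $\mathcal{R}$ be the sub-digraph of $D(\mathcal{A})$ formed by the $b$-edges; a $b$-cluster is a connected component of (the underlying graph of) $\mathcal{R}$. An automaton is a one-cluster automaton with respect to $b$ if it has exactly one $b$-cluster. *)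

theory Defs
  imports Main
begin

definition automaton :: "'q set \<Rightarrow> 'a set \<Rightarrow> ('q \<Rightarrow> 'a \<Rightarrow> 'q) \<Rightarrow> 'q \<Rightarrow> 'q set \<Rightarrow> bool" where
  "automaton Q A \<delta> q0 F \<longleftrightarrow> finite Q \<and> Q \<noteq> {} \<and> finite A \<and> q0 \<in> Q \<and> F \<subseteq> Q \<and>
     (\<forall>p\<in>Q. \<forall>a\<in>A. \<delta> p a \<in> Q)"

text \<open>In the digraph D(A) there is exactly one a-edge out of each state p, going to delta p a;
  we identify this edge with the pair (p, a).  A path v0 e1 v1 ... ek vk is given by the
  vertex list vs = [v0,...,vk] and the label list as = [a1,...,ak], edge ei = (v(i-1), ai).\<close>
definition walk :: "'q set \<Rightarrow> 'a set \<Rightarrow> ('q \<Rightarrow> 'a \<Rightarrow> 'q) \<Rightarrow> 'q list \<Rightarrow> 'a list \<Rightarrow> bool" where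
  "walk Q A \<delta> vs as \<longleftrightarrow> vs \<noteq> [] \<and> length vs = Suc (length as) \<and> set vs \<subseteq> Q \<and> set as \<subseteq> A \<and>
     (\<forall>i<length as. \<delta> (vs ! i) (as ! i) = vs ! Suc i)"

definition is_path :: "'q set \<Rightarrow> 'a set \<Rightarrow> ('q \<Rightarrow> 'a \<Rightarrow> 'q) \<Rightarrow> 'q list \<Rightarrow> 'a list \<Rightarrow> bool" where
  "is_path Q A \<delta> vs as \<longleftrightarrow> walk Q A \<delta> vs as \<and> distinct vs \<and> distinct (zip (butlast vs) as)"

definition is_cycle :: "'q set \<Rightarrow> 'a set \<Rightarrow> ('q \<Rightarrow> 'a \<Rightarrow> 'q) \<Rightarrow> 'q list \<Rightarrow> 'a list \<Rightarrow> bool" where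
  "is_cycle Q A \<delta> vs as \<longleftrightarrow> walk Q A \<delta> vs as \<and> as \<noteq> [] \<and> last vs = hd vs \<and>
     distinct (butlast vs) \<and> distinct (zip (butlast vs) as)"

definition accessible :: "'q set \<Rightarrow> 'a set \<Rightarrow> ('q \<Rightarrow> 'a \<Rightarrow> 'q) \<Rightarrow> 'q \<Rightarrow> 'q \<Rightarrow> bool" where
  "accessible Q A \<delta> q0 q \<longleftrightarrow> (\<exists>vs as. is_path Q A \<delta> vs as \<and> hd vs = q0 \<and> last vs = q)"

definition coaccessible :: "'q set \<Rightarrow> 'a set \<Rightarrow> ('q \<Rightarrow> 'a \<Rightarrow> 'q) \<Rightarrow> 'q set \<Rightarrow> 'q \<Rightarrow> bool" where
  "coaccessible Q A \<delta> F q \<longleftrightarrow> (\<exists>vs as. is_path Q A \<delta> vs as \<and> hd vs = q \<and> last vs \<in> F)"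

definition semi_flower :: "'q set \<Rightarrow> 'a set \<Rightarrow> ('q \<Rightarrow> 'a \<Rightarrow> 'q) \<Rightarrow> 'q \<Rightarrow> 'q set \<Rightarrow> bool" where
  "semi_flower Q A \<delta> q0 F \<longleftrightarrow> automaton Q A \<delta> q0 F \<and> F = {q0} \<and>
     (\<forall>q\<in>Q. accessible Q A \<delta> q0 q \<and> coaccessible Q A \<delta> F q) \<and>
     (\<forall>vs as. is_cycle Q A \<delta> vs as \<longrightarrow> q0 \<in> set vs)"

definition b_adj :: "'q set \<Rightarrow> ('q \<Rightarrow> 'a \<Rightarrow> 'q) \<Rightarrow> 'a \<Rightarrow> ('q \<times> 'q) set" where
  "b_adj Q \<delta> b = {(p, \<delta> p b) | p. p \<in> Q} \<union> {(\<delta> p b, p) | p. p \<in> Q}"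

definition b_cluster_of :: "'q set \<Rightarrow> ('q \<Rightarrow> 'a \<Rightarrow> 'q) \<Rightarrow> 'a \<Rightarrow> 'q \<Rightarrow> 'q set" where
  "b_cluster_of Q \<delta> b p = {q \<in> Q. (p, q) \<in> (b_adj Q \<delta> b)\<^sup>*}"

definition b_clusters :: "'q set \<Rightarrow> ('q \<Rightarrow> 'a \<Rightarrow> 'q) \<Rightarrow> 'a \<Rightarrow> 'q set set" where
  "b_clusters Q \<delta> b = b_cluster_of Q \<delta> b ` Q"

definition one_cluster :: "'q set \<Rightarrow> ('q \<Rightarrow> 'a \<Rightarrow> 'q) \<Rightarrow> 'a \<Rightarrow> bool" where
  "one_cluster Q \<delta> b \<longleftrightarrow> card (b_clusters Q \<delta> b) = 1"

end

theory Submission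
  imports Defs
begin

lemma reach_iter:
  assumes "p \<in> Q" "\<forall>x\<in>Q. \<delta> x b \<in> Q"
  shows "((\<lambda>x. \<delta> x b) ^^ n) p \<in> Q \<and> (p, ((\<lambda>x. \<delta> x b) ^^ n) p) \<in> (b_adj Q \<delta> b)\<^sup>*"
proof (induction n)
  case 0 then show ?case using assms by simp
next
  case (Suc n)
  let ?y = "((\<lambda>x. \<delta> x b) ^^ n) p"
  have "(?y, \<delta> ?y b) \<in> b_adj Q \<delta> b" using Suc unfolding b_adj_def by blast
  then show ?case using Suc assms by (auto intro: rtrancl_into_rtrancl)
qed

lemma first_repeat:
  fixes g :: "nat \<Rightarrow> 'q"
  assumes "finite Q" "\<forall>n. g n \<in> Q"
  shows "\<exists>i j. i < j \<and> g i = g j \<and> inj_on g {..<j}"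
proof -
  have "\<not> inj_on g {..card Q}"
  proof
    assume "inj_on g {..card Q}"
    then have "card (g ` {..card Q}) = Suc (card Q)" by (simp add: card_image)
    moreover have "g ` {..card Q} \<subseteq> Q" using assms by auto
    ultimately have "Suc (card Q) \<le> card Q" using card_mono[OF assms(1)] by metis
    then show False by simp
  qed
  then have ex: "\<exists>j. \<not> inj_on g {..j}" by blast
  define j where "j = (LEAST j. \<not> inj_on g {..j})"
  have nj: "\<not> inj_on g {..j}" unfolding j_def by (rule LeastI_ex[OF ex])
  have ij: "inj_on g {..<j}"
  proof (cases j)
    case 0 then show ?thesis by simp
  next
    case (Suc m)
    have "inj_on g {..m}" using not_less_Least[of m "\<lambda>j. \<not> inj_on g {..j}"] Suc j_def by auto
    moreover have "{..m} = {..<j}" using Suc by auto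
    ultimately show ?thesis by simp
  qed
  from nj obtain x y where xy: "x \<le> j" "y \<le> j" "x \<noteq> y" "g x = g y"
    unfolding inj_on_def by auto
  show ?thesis
  proof (cases "x < j")
    case True
    have "\<not> y < j"
    proof
      assume "y < j"
      then show False using True xy ij unfolding inj_on_def by blast
    qed
    then have "y = j" using xy by simp
    then have "x < j \<and> g x = g j \<and> inj_on g {..<j}" using True xy ij by simp
    then show ?thesis by blast
  next
    case False
    then have "x = j" using xy by auto
    then have "y < j" using xy by auto
    then show ?thesis using \<open>x = j\<close> xy ij by metis
  qed
qed

theorem mainTheorem1:
  fixes Q :: "'q set" and A :: "'a set" and \<delta> :: "'q \<Rightarrow> 'a \<Rightarrow> 'q" and q0 :: 'q and F :: "'q set"
  assumes "semi_flower Q A \<delta> q0 F"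
    and "b \<in> A"
  shows "one_cluster Q \<delta> b"
proof -
  have aut: "automaton Q A \<delta> q0 F" and cyc: "\<forall>vs as. is_cycle Q A \<delta> vs as \<longrightarrow> q0 \<in> set vs"
    using assms(1) unfolding semi_flower_def by auto
  have fin: "finite Q" and ne: "Q \<noteq> {}" and q0Q: "q0 \<in> Q" and cl: "\<forall>x\<in>Q. \<delta> x b \<in> Q"
    using aut assms(2) unfolding automaton_def by auto
  let ?R = "b_adj Q \<delta> b"
  have symR: "?R\<inverse> = ?R" unfolding b_adj_def by auto
  have reach: "(p, q0) \<in> ?R\<^sup>*" if pQ: "p \<in> Q" for p
  proof -
    define g where "g n = ((\<lambda>x. \<delta> x b) ^^ n) p" for n
    have gQ: "\<forall>n. g n \<in> Q" and gR: "\<And>n. (p, g n) \<in> ?R\<^sup>*"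
      using reach_iter[of p Q \<delta> b, OF pQ cl] unfolding g_def by auto
    have gS: "\<And>n. \<delta> (g n) b = g (Suc n)" unfolding g_def by simp
    obtain i j where ij: "i < j" "g i = g j" "inj_on g {..<j}"
      using first_repeat[OF fin gQ] by blast
    define vs where "vs = map g [i..<j] @ [g i]"
    define as where "as = replicate (j - i) b"
    have bl: "butlast vs = map g [i..<j]" unfolding vs_def by simp
    have dist: "distinct (map g [i..<j])"
      using ij(3) by (simp add: distinct_map inj_on_subset[of g "{..<j}"] subset_eq)
    have walk: "walk Q A \<delta> vs as"
      unfolding walk_def
    proof (intro conjI allI impI)
      show "vs \<noteq> []" unfolding vs_def by simp
      show "length vs = Suc (length as)" unfolding vs_def as_def by simp
      show "set vs \<subseteq> Q" unfolding vs_def using gQ by auto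
      show "set as \<subseteq> A" unfolding as_def using assms(2) by auto
      fix k assume k: "k < length as"
      then have k': "k < j - i" unfolding as_def by simp
      have vk: "vs ! k = g (i + k)" unfolding vs_def using k' by (simp add: nth_append)
      have ak: "as ! k = b" unfolding as_def using k' by simp
      have "vs ! Suc k = g (i + Suc k)"
      proof (cases "Suc k < j - i")
        case True then show ?thesis unfolding vs_def by (simp add: nth_append)
      next
        case False
        then have "Suc k = j - i" using k' by simp
        then show ?thesis unfolding vs_def using ij by (simp add: nth_append)
      qed
      then show "\<delta> (vs ! k) (as ! k) = vs ! Suc k" using vk ak gS by simp
    qed
    have "is_cycle Q A \<delta> vs as"
      unfolding is_cycle_def
    proof (intro conjI)
      show "walk Q A \<delta> vs as" by (rule walk)
      show "as \<noteq> []" unfolding as_def using ij by simp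
      show "last vs = hd vs" unfolding vs_def using ij by (simp add: upt_conv_Cons)
      show "distinct (butlast vs)" using bl dist by simp
      show "distinct (zip (butlast vs) as)" using bl dist by (simp add: distinct_zipI1)
    qed
    then have "q0 \<in> set vs" using cyc by blast
    then obtain n where "q0 = g n" unfolding vs_def by auto
    then show ?thesis using gR by simp
  qed
  have eqc: "b_cluster_of Q \<delta> b p = b_cluster_of Q \<delta> b q0" if pQ: "p \<in> Q" for p
  proof -
    have a: "(p, q0) \<in> ?R\<^sup>*" using reach[OF pQ] .
    have "(q0, p) \<in> (?R\<inverse>)\<^sup>*" using a by (simp add: rtrancl_converse)
    then have b: "(q0, p) \<in> ?R\<^sup>*" using symR by simp
    show ?thesis unfolding b_cluster_of_def using a b by (auto intro: rtrancl_trans)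
  qed
  have "b_clusters Q \<delta> b = {b_cluster_of Q \<delta> b q0}"
    unfolding b_clusters_def
  proof
    show "b_cluster_of Q \<delta> b ` Q \<subseteq> {b_cluster_of Q \<delta> b q0}" using eqc by blast
    show "{b_cluster_of Q \<delta> b q0} \<subseteq> b_cluster_of Q \<delta> b ` Q" using q0Q by blast
  qed
  then show ?thesis unfolding one_cluster_def by simp
qed

end
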